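(* Assume $\nu_0\ge 2$. The sets $\mathcal{V}_i^1$, $i\in[1,\nu_0]$, are pairwise disjoint cycles contained in $\overline{\Omega}$. Moreover, for each $i$, the bottom of $\mathcal{V}_i^1$ is $\mathcal{F}(\mathcal{V}_i^1)=\mathcal{P}_i^1$, and its depth is $\Gamma^{\mathcal{V}_i^1}=\Gamma_i^1$.
   Context: Let $\Omega$ be a finite set equipped with a connected undirected graph structure; write $\eta\sim\xi$ if $\{\eta,\xi\}$ is an edge. Let $\mathbb{H}:\Omega\to\mathbb{R}$ be a function. A path $\omega:\eta\to\xi$ is a sequence $\omega=(\omega_n)_{n=0}^N$ with $\omega_0=\eta$, $\omega_N=\xi$ and $\omega_n\sim\omega_{n+1}$ for all $n$; $N=0$ is allowed. Its height is $\Phi_\omega:=\max_{0\le n\le N}\mathbb{H}(\omega_n)$. The communication height is $\Phi(\eta,\xi):=\min_{\omega:\eta\to\xi}\Phi_\omega$. For nonempty sets $\mathcal{A},\mathcal{B}$, write $\Phi(\mathcal{A},\mathcal{B}):=\min_{\eta\in\mathcal{A},\xi\in\mathcal{B}}\Phi(\eta,\xi)$ and $\Phi(\mathcal{A},\eta):=\Phi(\mathcal{A},\{\eta\})$. Let $\mathcal{S}:=\operatorname{argmin}_\Omega\mathbb{H}$ be the set of ground states. Define $\overline{\Phi}:=\max_{s,s'\in\mathcal{S}}\Phi(s,s')$ and $\overline{\Omega}:=\{\eta\in\Omega:\Phi(\mathcal{S},\eta)\le\overline{\Phi}\}$. For $\mathcal{A}\subseteq\Omega$, define $\mathcal{F}(\mathcal{A}):=\operatorname{argmin}_{\mathcal{A}}\mathbb{H}$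 and $\partial\mathcal{A}:=\{\eta\notin\mathcal{A}:\eta\sim\xi\text{ for some }\xi\in\mathcal{A}\}$. A set $\mathcal{A}$ is connected if any two of its points are joined by a path lying inside $\mathcal{A}$. A stable plateau is a nonempty connected set $\mathcal{P}$ on which $\mathbb{H}$ is constant, with value $\mathbb{H}(\mathcal{P})$, such that $\mathbb{H}(\zeta)>\mathbb{H}(\mathcal{P})$ for all $\zeta\in\partial\mathcal{P}$. A cycle is a nonempty connected set $\mathcal{C}$ with $\max_{\mathcal{C}}\mathbb{H}<\min_{\partial\mathcal{C}}\mathbb{H}$. Its depth is $\Gamma^{\mathcal{C}}:=\min_{\partial\mathcal{C}}\mathbb{H}-\min_{\mathcal{C}}\mathbb{H}$. Let $\mathscr{P}^1=\{\mathcal{P}_1^1,\dots,\mathcal{P}_{\nu_0}^1\}$ be the collection of all stable plateaux contained in $\overline{\Omega}$. For $i\in[1,\nu_0]$, set $\breve{\mathcal{P}}_i^1:=\bigcup_{j\ne i}\mathcal{P}_j^1$. Define the initial depth $\Gamma_i^1:=\Phi(\mathcal{P}_i^1,\breve{\mathcal{P}}_i^1)-\mathbb{H}(\mathcal{P}_i^1)$ and the set $\mathcal{V}_i^1:=\{\eta\in\Omega:\Phi(\mathcal{P}_i^1,\eta)-\mathbb{H}(\mathcal{P}_i^1)<\Gamma_i^1\}$. Here $[a,b]$ denotes the set of integers from $a$ to $b$. *)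

theory Defs
  imports Complex_Main
begin

text \<open>Energy landscape on a finite graph. The vertex set is the finite type 'a,
 the edge relation is E (symmetric), the Hamiltonian is H.\<close>

definition is_path :: "('a \<Rightarrow> 'a \<Rightarrow> bool) \<Rightarrow> 'a list \<Rightarrow> 'a \<Rightarrow> 'a \<Rightarrow> bool" where
  "is_path E w x y \<longleftrightarrow> w \<noteq> [] \<and> hd w = x \<and> last w = y \<and>
     (\<forall>n. Suc n < length w \<longrightarrow> E (w ! n) (w ! Suc n))"

definition path_height :: "('a \<Rightarrow> real) \<Rightarrow> 'a list \<Rightarrow> real" where
  "path_height H w = Max (H ` set w)"

definition graph_connected :: "('a \<Rightarrow> 'a \<Rightarrow> bool) \<Rightarrow> bool" where
  "graph_connected E \<longleftrightarrow> (\<forall>x y. \<exists>w. is_path E w x y)"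

definition comm_height :: "('a \<Rightarrow> 'a \<Rightarrow> bool) \<Rightarrow> ('a \<Rightarrow> real) \<Rightarrow> 'a \<Rightarrow> 'a \<Rightarrow> real" where
  "comm_height E H x y = Min {path_height H w | w. is_path E w x y}"

definition comm_height_set :: "('a \<Rightarrow> 'a \<Rightarrow> bool) \<Rightarrow> ('a \<Rightarrow> real) \<Rightarrow> 'a set \<Rightarrow> 'a set \<Rightarrow> real" where
  "comm_height_set E H A B = Min {comm_height E H x y | x y. x \<in> A \<and> y \<in> B}"

definition ground_states :: "('a \<Rightarrow> real) \<Rightarrow> 'a set" where
  "ground_states H = {x. \<forall>y. H x \<le> H y}"

definition Phi_bar :: "('a \<Rightarrow> 'a \<Rightarrow> bool) \<Rightarrow> ('a \<Rightarrow> real) \<Rightarrow> real" where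
  "Phi_bar E H = Max {comm_height E H s s' | s s'. s \<in> ground_states H \<and> s' \<in> ground_states H}"

definition Omega_bar :: "('a \<Rightarrow> 'a \<Rightarrow> bool) \<Rightarrow> ('a \<Rightarrow> real) \<Rightarrow> 'a set" where
  "Omega_bar E H = {x. comm_height_set E H (ground_states H) {x} \<le> Phi_bar E H}"

definition bottom :: "('a \<Rightarrow> real) \<Rightarrow> 'a set \<Rightarrow> 'a set" where
  "bottom H A = {x \<in> A. \<forall>y \<in> A. H x \<le> H y}"

definition boundary :: "('a \<Rightarrow> 'a \<Rightarrow> bool) \<Rightarrow> 'a set \<Rightarrow> 'a set" where
  "boundary E A = {x. x \<notin> A \<and> (\<exists>y \<in> A. E x y)}"

definition set_connected :: "('a \<Rightarrow> 'a \<Rightarrow> bool) \<Rightarrow> 'a set \<Rightarrow> bool" where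
  "set_connected E A \<longleftrightarrow> (\<forall>x \<in> A. \<forall>y \<in> A. \<exists>w. is_path E w x y \<and> set w \<subseteq> A)"

text \<open>Value of H on a set where it is constant.\<close>
definition Hval :: "('a \<Rightarrow> real) \<Rightarrow> 'a set \<Rightarrow> real" where
  "Hval H P = H (SOME x. x \<in> P)"

definition stable_plateau :: "('a \<Rightarrow> 'a \<Rightarrow> bool) \<Rightarrow> ('a \<Rightarrow> real) \<Rightarrow> 'a set \<Rightarrow> bool" where
  "stable_plateau E H P \<longleftrightarrow> P \<noteq> {} \<and> set_connected E P \<and>
     (\<forall>x \<in> P. \<forall>y \<in> P. H x = H y) \<and> (\<forall>z \<in> boundary E P. H z > Hval H P)"

text \<open>Cycle: max over C strictly below min over the boundary (min of empty set = +infinity).\<close>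
definition is_cycle :: "('a \<Rightarrow> 'a \<Rightarrow> bool) \<Rightarrow> ('a \<Rightarrow> real) \<Rightarrow> 'a set \<Rightarrow> bool" where
  "is_cycle E H C \<longleftrightarrow> C \<noteq> {} \<and> set_connected E C \<and>
     (\<forall>x \<in> C. \<forall>z \<in> boundary E C. H x < H z)"

definition cycle_depth :: "('a \<Rightarrow> 'a \<Rightarrow> bool) \<Rightarrow> ('a \<Rightarrow> real) \<Rightarrow> 'a set \<Rightarrow> real" where
  "cycle_depth E H C = Min (H ` boundary E C) - Min (H ` C)"

definition plateaux1 :: "('a \<Rightarrow> 'a \<Rightarrow> bool) \<Rightarrow> ('a \<Rightarrow> real) \<Rightarrow> 'a set set" where
  "plateaux1 E H = {P. stable_plateau E H P \<and> P \<subseteq> Omega_bar E H}"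

definition breve1 :: "('a \<Rightarrow> 'a \<Rightarrow> bool) \<Rightarrow> ('a \<Rightarrow> real) \<Rightarrow> 'a set \<Rightarrow> 'a set" where
  "breve1 E H P = \<Union> (plateaux1 E H - {P})"

definition Gamma1 :: "('a \<Rightarrow> 'a \<Rightarrow> bool) \<Rightarrow> ('a \<Rightarrow> real) \<Rightarrow> 'a set \<Rightarrow> real" where
  "Gamma1 E H P = comm_height_set E H P (breve1 E H P) - Hval H P"

definition V1 :: "('a \<Rightarrow> 'a \<Rightarrow> bool) \<Rightarrow> ('a \<Rightarrow> real) \<Rightarrow> 'a set \<Rightarrow> 'a set" where
  "V1 E H P = {x. comm_height_set E H P {x} - Hval H P < Gamma1 E H P}"

end

theory Submission
  imports Defs
begin

lemma is_path_alt:
  "is_path E w x y \<longleftrightarrow> w \<noteq> [] \<and> hd w = x \<and> last w = y \<and> successively E w"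
  unfolding is_path_def successively_conv_nth by blast

lemma path_height_ge: "z \<in> set w \<Longrightarrow> H z \<le> path_height H w"
  by (auto simp: path_height_def intro!: Max_ge)

lemma path_height_le: "w \<noteq> [] \<Longrightarrow> \<forall>z\<in>set w. H z \<le> t \<Longrightarrow> path_height H w \<le> t"
  by (auto simp: path_height_def)

lemma path_height_in: "w \<noteq> [] \<Longrightarrow> \<exists>z\<in>set w. H z = path_height H w"
proof -
  assume "w \<noteq> []"
  then have "path_height H w \<in> H ` set w" unfolding path_height_def by (intro Max_in) auto
  then show ?thesis by auto
qed

lemma is_path_single: "is_path E [x] x x"
  by (simp add: is_path_def)

lemma is_path_edge: "E x y \<Longrightarrow> is_path E [x,y] x y"
  by (simp add: is_path_alt)

lemma is_path_append:
  assumes "is_path E w x y" "is_path E v y z"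
  shows "is_path E (w @ tl v) x z" "set (w @ tl v) \<subseteq> set w \<union> set v"
proof -
  obtain v' where v: "v = y # v'" using assms(2) unfolding is_path_alt by (cases v) auto
  have sv: "successively E (y # v')" using assms(2) v unfolding is_path_alt by simp
  show "is_path E (w @ tl v) x z"
    using assms sv unfolding is_path_alt v
    by (auto simp: successively_append_iff successively_Cons)
  show "set (w @ tl v) \<subseteq> set w \<union> set v" using v by auto
qed

lemma is_path_rev:
  assumes sym: "\<And>x y. E x y \<Longrightarrow> E y x" and "is_path E w x y"
  shows "is_path E (rev w) y x"
proof -
  have "successively E w" using assms(2) unfolding is_path_alt by simp
  then have "successively (\<lambda>a b. E b a) w" by (rule successively_mono) (use sym in blast)
  then show ?thesis using assms(2) unfolding is_path_alt by (simp add: hd_rev last_rev)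
qed

lemma is_path_prefix:
  assumes "is_path E w x y" "z \<in> set w"
  shows "\<exists>w'. is_path E w' x z \<and> set w' \<subseteq> set w"
proof -
  obtain ys zs where w: "w = ys @ z # zs" using assms(2) by (meson split_list)
  have "successively E ((ys @ [z]) @ zs)" using assms(1) w unfolding is_path_alt by simp
  then have "successively E (ys @ [z])" by (simp only: successively_append_iff)
  moreover have "hd (ys @ [z]) = x" using assms(1) w unfolding is_path_alt by (cases ys) auto
  ultimately show ?thesis using w unfolding is_path_alt by (intro exI[of _ "ys @ [z]"]) auto
qed

lemma first_exit:
  "is_path E w x y \<Longrightarrow> x \<in> A \<Longrightarrow> y \<notin> A \<Longrightarrow> \<exists>a b. a \<in> A \<and> b \<notin> A \<and> E a b \<and> b \<in> set w"
proof (induction w arbitrary: x)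
  case Nil then show ?case by (simp add: is_path_alt)
next
  case (Cons a w')
  show ?case
  proof (cases w')
    case Nil then show ?thesis using Cons.prems by (auto simp: is_path_alt)
  next
    case (Cons b w'')
    have ab: "E a b" "is_path E w' b y" "a = x"
      using Cons.prems(1) \<open>w' = b # w''\<close> by (auto simp: is_path_alt)
    show ?thesis
    proof (cases "b \<in> A")
      case True
      then show ?thesis using Cons.IH[OF ab(2) True Cons.prems(3)] by auto
    next
      case False then show ?thesis using ab Cons.prems(2) \<open>w' = b # w''\<close> by auto
    qed
  qed
qed

lemma path_height_range: "w \<noteq> [] \<Longrightarrow> path_height H w \<in> range H"
  using path_height_in[of w H] by (metis rangeI)

lemma ch_finite: "finite {path_height H w | w. is_path E w x (y::'a::finite)}"
proof (rule finite_subset[of _ "range H"])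
  show "{path_height H w | w. is_path E w x y} \<subseteq> range H"
    using path_height_range by (fastforce simp: is_path_def)
qed simp

lemma ch_le: "is_path E w x (y::'a::finite) \<Longrightarrow> comm_height E H x y \<le> path_height H w"
  unfolding comm_height_def by (rule Min_le[OF ch_finite]) auto

lemma ch_ex: "graph_connected E \<Longrightarrow> \<exists>w. is_path E w x (y::'a::finite) \<and> path_height H w = comm_height E H x y"
proof -
  assume "graph_connected E"
  then have "{path_height H w | w. is_path E w x y} \<noteq> {}" unfolding graph_connected_def by auto
  then have "comm_height E H x y \<in> {path_height H w | w. is_path E w x y}"
    unfolding comm_height_def by (rule Min_in[OF ch_finite])
  then show ?thesis by auto
qed

lemma chs_finite: "finite {comm_height E H x y | x y. x \<in> A \<and> (y::'a::finite) \<in> B}"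
  by (rule finite_subset[of _ "range (\<lambda>(x,y). comm_height E H x y)"]) auto

lemma chs_le: "x \<in> A \<Longrightarrow> (y::'a::finite) \<in> B \<Longrightarrow> comm_height_set E H A B \<le> comm_height E H x y"
  unfolding comm_height_set_def by (rule Min_le[OF chs_finite]) auto

lemma chs_ex: "A \<noteq> {} \<Longrightarrow> B \<noteq> {} \<Longrightarrow> \<exists>x\<in>A. \<exists>(y::'a::finite)\<in>B. comm_height_set E H A B = comm_height E H x y"
proof -
  assume "A \<noteq> {}" "B \<noteq> {}"
  then have "{comm_height E H x y | x y. x \<in> A \<and> y \<in> B} \<noteq> {}" by auto
  then have "comm_height_set E H A B \<in> {comm_height E H x y | x y. x \<in> A \<and> y \<in> B}"
    unfolding comm_height_set_def by (rule Min_in[OF chs_finite])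
  then show ?thesis by auto
qed

lemma chs_single: "A \<noteq> {} \<Longrightarrow> \<exists>x\<in>A. comm_height_set E H A {y::'a::finite} = comm_height E H x y"
  using chs_ex[of A "{y}"] by auto

context
  fixes E :: "'a::finite \<Rightarrow> 'a \<Rightarrow> bool" and H :: "'a \<Rightarrow> real"
  assumes sym: "\<And>x y. E x y \<Longrightarrow> E y x"
    and conn: "graph_connected E"
begin

abbreviation "ch \<equiv> comm_height E H"

lemma ch_tri: "ch x z \<le> max (ch x y) (ch y z)"
proof -
  obtain w where w: "is_path E w x y" "path_height H w = ch x y" using ch_ex[OF conn] by blast
  obtain v where v: "is_path E v y z" "path_height H v = ch y z" using ch_ex[OF conn] by blast
  have "ch x z \<le> path_height H (w @ tl v)" by (rule ch_le[OF is_path_append(1)[OF w(1) v(1)]])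
  also have "\<dots> \<le> max (ch x y) (ch y z)"
  proof (rule path_height_le)
    show "w @ tl v \<noteq> []" using w(1) by (auto simp: is_path_def)
    show "\<forall>u\<in>set (w @ tl v). H u \<le> max (ch x y) (ch y z)"
    proof
      fix u assume "u \<in> set (w @ tl v)"
      then have "u \<in> set w \<or> u \<in> set v" using is_path_append(2)[OF w(1) v(1)] by blast
      then show "H u \<le> max (ch x y) (ch y z)"
        using path_height_ge[of u w H] path_height_ge[of u v H] w(2) v(2) by force
    qed
  qed
  finally show ?thesis .
qed

lemma ch_sym: "ch x y = ch y x"
proof -
  have "ch x y \<le> ch y x" if "True" for x y
  proof -
    obtain w where w: "is_path E w y x" "path_height H w = ch y x" using ch_ex[OF conn] by blast
    have "ch x y \<le> path_height H (rev w)" by (rule ch_le[OF is_path_rev[OF sym w(1)]])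
    then show ?thesis using w(2) by (simp add: path_height_def)
  qed
  then show ?thesis by (meson antisym)
qed

lemma ch_self: "ch x x \<le> H x"
  using ch_le[OF is_path_single[of E x], of H] by (simp add: path_height_def)

lemma ch_edge: "E x y \<Longrightarrow> ch x y \<le> max (H x) (H y)"
  using ch_le[OF is_path_edge[of E x y], of H] by (simp add: path_height_def)

lemma ch_ge1: "H x \<le> ch x y"
proof -
  obtain w where w: "is_path E w x y" "path_height H w = ch x y" using ch_ex[OF conn] by blast
  have "x \<in> set w" using w(1) by (auto simp: is_path_def)
  then show ?thesis using path_height_ge w(2) by metis
qed

lemma ch_ge2: "H y \<le> ch x y"
  using ch_ge1[of y x] ch_sym by simp

lemma Hval_eq: "stable_plateau E H P \<Longrightarrow> p \<in> P \<Longrightarrow> Hval H P = H p"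
  unfolding stable_plateau_def Hval_def by (metis some_in_eq empty_iff)

lemma plateau_escape:
  assumes "stable_plateau E H P" "x \<in> P" "y \<notin> P"
  shows "Hval H P < ch x y"
proof -
  obtain w where w: "is_path E w x y" "path_height H w = ch x y" using ch_ex[OF conn] by blast
  obtain a b where ab: "a \<in> P" "b \<notin> P" "E a b" "b \<in> set w" using first_exit[OF w(1) assms(2,3)] by blast
  have "b \<in> boundary E P" using ab sym unfolding boundary_def by blast
  then have "Hval H P < H b" using assms(1) unfolding stable_plateau_def by blast
  also have "\<dots> \<le> ch x y" using path_height_ge[OF ab(4), of H] w(2) by simp
  finally show ?thesis .
qed

lemma plateau_disjoint:
  assumes "stable_plateau E H P" "stable_plateau E H Q" "q \<in> P" "q \<in> Q" "y \<in> Q"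
  shows "y \<in> P"
proof (rule ccontr)
  assume "y \<notin> P"
  obtain w where w: "is_path E w q y" "set w \<subseteq> Q"
    using assms(2,4,5) unfolding stable_plateau_def set_connected_def by blast
  obtain a b where ab: "a \<in> P" "b \<notin> P" "E a b" "b \<in> set w" using first_exit[OF w(1) assms(3) \<open>y \<notin> P\<close>] by blast
  have "b \<in> boundary E P" using ab sym unfolding boundary_def by blast
  then have "Hval H P < H b" using assms(1) unfolding stable_plateau_def by blast
  moreover have "H b = H q" using assms(2,4) ab(4) w(2) unfolding stable_plateau_def by blast
  moreover have "Hval H P = H q" using Hval_eq assms(1,3) by blast
  ultimately show False by simp
qed


lemma ground_ne: "ground_states H \<noteq> {}"
proof -
  have "Min (range H) \<in> range H" by (rule Min_in) auto
  then obtain s where "H s = Min (range H)" by (metis rangeE)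
  then have "s \<in> ground_states H" unfolding ground_states_def by simp
  then show ?thesis by auto
qed

lemma phibar_ge: "s \<in> ground_states H \<Longrightarrow> s' \<in> ground_states H \<Longrightarrow> ch s s' \<le> Phi_bar E H"
  unfolding Phi_bar_def
  by (rule Max_ge, rule finite_subset[of _ "range (\<lambda>(x,y). ch x y)"]) auto

lemma omega_ex: "x \<in> Omega_bar E H \<Longrightarrow> \<exists>s\<in>ground_states H. ch s x \<le> Phi_bar E H"
  using chs_single[OF ground_ne, of E H x] unfolding Omega_bar_def by force

lemma pl_plateau: "P \<in> plateaux1 E H \<Longrightarrow> stable_plateau E H P"
  unfolding plateaux1_def by blast

lemma pl_ne: "P \<in> plateaux1 E H \<Longrightarrow> P \<noteq> {}"
  unfolding plateaux1_def stable_plateau_def by blast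

lemma pl_omega: "P \<in> plateaux1 E H \<Longrightarrow> P \<subseteq> Omega_bar E H"
  unfolding plateaux1_def by blast

lemma phi_le: "p \<in> P \<Longrightarrow> comm_height_set E H P {x} \<le> ch p x"
  by (rule chs_le) auto

lemma c_le: "P \<in> plateaux1 E H \<Longrightarrow> R \<in> plateaux1 E H \<Longrightarrow> R \<noteq> P \<Longrightarrow> p \<in> P \<Longrightarrow> q \<in> R
   \<Longrightarrow> comm_height_set E H P (breve1 E H P) \<le> ch p q"
proof -
  assume a: "P \<in> plateaux1 E H" "R \<in> plateaux1 E H" "R \<noteq> P" "p \<in> P" "q \<in> R"
  have "q \<in> breve1 E H P" unfolding breve1_def using a(2,3,5) by blast
  from chs_le[OF a(4) this] show ?thesis .
qed

lemma c_ex: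
  assumes "P \<in> plateaux1 E H" "R \<in> plateaux1 E H" "R \<noteq> P"
  shows "\<exists>p\<in>P. \<exists>R'\<in>plateaux1 E H. R' \<noteq> P \<and> (\<exists>q\<in>R'. comm_height_set E H P (breve1 E H P) = ch p q)"
proof -
  have "breve1 E H P \<noteq> {}" using assms pl_ne[OF assms(2)] unfolding breve1_def by blast
  from chs_ex[OF pl_ne[OF assms(1)] this] obtain p q where
    pq: "p \<in> P" "q \<in> breve1 E H P" "comm_height_set E H P (breve1 E H P) = ch p q" by blast
  from pq(2) obtain R' where "R' \<in> plateaux1 E H" "R' \<noteq> P" "q \<in> R'" unfolding breve1_def by blast
  then show ?thesis using pq(1,3) by blast
qed

lemma pl_disj:
  assumes "P \<in> plateaux1 E H" "R \<in> plateaux1 E H" "R \<noteq> P" "q \<in> R"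
  shows "q \<notin> P"
proof
  assume "q \<in> P"
  have "R \<subseteq> P" using plateau_disjoint[OF pl_plateau[OF assms(1)] pl_plateau[OF assms(2)] \<open>q \<in> P\<close> assms(4)] by blast
  moreover have "P \<subseteq> R" using plateau_disjoint[OF pl_plateau[OF assms(2)] pl_plateau[OF assms(1)] assms(4) \<open>q \<in> P\<close>] by blast
  ultimately show False using assms(3) by blast
qed

lemma V_eq: "V1 E H P = {x. comm_height_set E H P {x} < comm_height_set E H P (breve1 E H P)}"
  unfolding V1_def Gamma1_def by auto

lemma V_disj:
  assumes "P \<in> plateaux1 E H" "Q \<in> plateaux1 E H" "Q \<noteq> P"
  shows "V1 E H P \<inter> V1 E H Q = {}"
proof (rule ccontr)
  assume "V1 E H P \<inter> V1 E H Q \<noteq> {}"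
  then obtain x where x: "x \<in> V1 E H P" "x \<in> V1 E H Q" by blast
  obtain p where p: "p \<in> P" "comm_height_set E H P {x} = ch p x" using chs_single[OF pl_ne[OF assms(1)]] by blast
  obtain q where q: "q \<in> Q" "comm_height_set E H Q {x} = ch q x" using chs_single[OF pl_ne[OF assms(2)]] by blast
  have 1: "comm_height_set E H P (breve1 E H P) \<le> ch p q" by (rule c_le[OF assms p(1) q(1)])
  have 2: "comm_height_set E H Q (breve1 E H Q) \<le> ch q p" by (rule c_le[OF assms(2,1) _ q(1) p(1)]) (use assms(3) in auto)
  have 3: "ch p q \<le> max (ch p x) (ch q x)" using ch_tri[of p q x] ch_sym[of x q] by simp
  have a: "ch p x < comm_height_set E H P (breve1 E H P)" using x(1) p(2) unfolding V_eq by simp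
  have b: "ch q x < comm_height_set E H Q (breve1 E H Q)" using x(2) q(2) unfolding V_eq by simp
  show False using a b 1 2 3 ch_sym[of p q] by linarith
qed


lemma V_main:
  assumes P: "P \<in> plateaux1 E H" and R: "R \<in> plateaux1 E H" "R \<noteq> P"
  shows "is_cycle E H (V1 E H P) \<and> V1 E H P \<subseteq> Omega_bar E H
         \<and> bottom H (V1 E H P) = P
         \<and> cycle_depth E H (V1 E H P) = Gamma1 E H P"
proof -
  define c where "c = comm_height_set E H P (breve1 E H P)"
  define h where "h = Hval H P"
  define phi where "phi x = comm_height_set E H P {x}" for x
  define V where "V = V1 E H P"
  have V: "V = {x. phi x < c}" unfolding V_def phi_def c_def by (rule V_eq)
  have SP: "stable_plateau E H P" by (rule pl_plateau[OF P])
  have Pne: "P \<noteq> {}" by (rule pl_ne[OF P])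
  have hP: "\<And>p. p \<in> P \<Longrightarrow> H p = h" unfolding h_def using Hval_eq[OF SP] by simp
  have phiE: "\<And>x. \<exists>p\<in>P. phi x = ch p x" unfolding phi_def using chs_single[OF Pne] by blast
  have phiL: "\<And>x p. p \<in> P \<Longrightarrow> phi x \<le> ch p x" unfolding phi_def by (rule phi_le)
  have cL: "\<And>R p q. R \<in> plateaux1 E H \<Longrightarrow> R \<noteq> P \<Longrightarrow> p \<in> P \<Longrightarrow> q \<in> R \<Longrightarrow> c \<le> ch p q"
    unfolding c_def using c_le[OF P] by blast
  obtain p0 R0 q0 where c0: "p0 \<in> P" "R0 \<in> plateaux1 E H" "R0 \<noteq> P" "q0 \<in> R0" "c = ch p0 q0"
    using c_ex[OF P R] unfolding c_def by blast
  have hc: "h < c"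
  proof -
    have "q0 \<notin> P" by (rule pl_disj[OF P c0(2,3,4)])
    from plateau_escape[OF SP c0(1) this] show ?thesis unfolding h_def c0(5) .
  qed
  have PV: "P \<subseteq> V"
  proof
    fix x assume "x \<in> P"
    have "phi x \<le> ch x x" by (rule phiL[OF \<open>x \<in> P\<close>])
    also have "\<dots> \<le> H x" by (rule ch_self)
    also have "\<dots> = h" using hP \<open>x \<in> P\<close> by simp
    finally show "x \<in> V" unfolding V using hc by simp
  qed
  have HV: "\<And>x. x \<in> V \<Longrightarrow> H x < c"
  proof -
    fix x assume "x \<in> V"
    obtain p where "p \<in> P" "phi x = ch p x" using phiE by blast
    then show "H x < c" using ch_ge2[of x p] \<open>x \<in> V\<close> unfolding V by simp
  qed
  have notV: "\<And>q R. R \<in> plateaux1 E H \<Longrightarrow> R \<noteq> P \<Longrightarrow> q \<in> R \<Longrightarrow> q \<notin> V"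
  proof -
    fix q R assume a: "R \<in> plateaux1 E H" "R \<noteq> P" "q \<in> R"
    obtain p where "p \<in> P" "phi q = ch p q" using phiE by blast
    then show "q \<notin> V" using cL[OF a(1,2) \<open>p \<in> P\<close> a(3)] unfolding V by simp
  qed
  have cPhi: "c \<le> Phi_bar E H"
  proof -
    obtain s1 where s1: "s1 \<in> ground_states H" "ch s1 p0 \<le> Phi_bar E H"
      using omega_ex pl_omega[OF P] c0(1) by blast
    obtain s2 where s2: "s2 \<in> ground_states H" "ch s2 q0 \<le> Phi_bar E H"
      using omega_ex pl_omega[OF c0(2)] c0(4) by blast
    have "ch p0 q0 \<le> max (ch p0 s1) (ch s1 q0)" by (rule ch_tri)
    moreover have "ch s1 q0 \<le> max (ch s1 s2) (ch s2 q0)" by (rule ch_tri)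
    moreover have "ch s1 s2 \<le> Phi_bar E H" by (rule phibar_ge[OF s1(1) s2(1)])
    ultimately show ?thesis using s1(2) s2(2) ch_sym[of p0 s1] c0(5) by linarith
  qed
  have VO: "V \<subseteq> Omega_bar E H"
  proof
    fix x assume "x \<in> V"
    obtain p where p: "p \<in> P" "phi x = ch p x" using phiE by blast
    obtain s where s: "s \<in> ground_states H" "ch s p \<le> Phi_bar E H"
      using omega_ex pl_omega[OF P] p(1) by blast
    have "comm_height_set E H (ground_states H) {x} \<le> ch s x" by (rule chs_le[OF s(1)]) simp
    also have "\<dots> \<le> max (ch s p) (ch p x)" by (rule ch_tri)
    also have "\<dots> \<le> Phi_bar E H" using s(2) p(2) \<open>x \<in> V\<close> cPhi unfolding V by simp
    finally show "x \<in> Omega_bar E H" unfolding Omega_bar_def by simp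
  qed
  have Vpath: "\<And>x. x \<in> V \<Longrightarrow> \<exists>p\<in>P. \<exists>w. is_path E w p x \<and> set w \<subseteq> V"
  proof -
    fix x assume "x \<in> V"
    obtain p where p: "p \<in> P" "phi x = ch p x" using phiE by blast
    obtain w where w: "is_path E w p x" "path_height H w = ch p x" using ch_ex[OF conn] by blast
    have "set w \<subseteq> V"
    proof
      fix z assume "z \<in> set w"
      obtain w' where w': "is_path E w' p z" "set w' \<subseteq> set w" using is_path_prefix[OF w(1) \<open>z \<in> set w\<close>] by blast
      have "phi z \<le> ch p z" by (rule phiL[OF p(1)])
      also have "\<dots> \<le> path_height H w'" by (rule ch_le[OF w'(1)])
      also have "\<dots> \<le> path_height H w"
        by (rule path_height_le) (use w'(1) w'(2) path_height_ge[of _ w H] in \<open>auto simp: is_path_def\<close>)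
      also have "\<dots> < c" using w(2) p(2) \<open>x \<in> V\<close> unfolding V by simp
      finally show "z \<in> V" unfolding V by simp
    qed
    then show "\<exists>p\<in>P. \<exists>w. is_path E w p x \<and> set w \<subseteq> V" using p(1) w(1) by blast
  qed
  have Vconn: "set_connected E V"
    unfolding set_connected_def
  proof (intro ballI)
    fix x y assume "x \<in> V" "y \<in> V"
    obtain px wx where x: "px \<in> P" "is_path E wx px x" "set wx \<subseteq> V" using Vpath[OF \<open>x \<in> V\<close>] by blast
    obtain py wy where y: "py \<in> P" "is_path E wy py y" "set wy \<subseteq> V" using Vpath[OF \<open>y \<in> V\<close>] by blast
    obtain u where u: "is_path E u px py" "set u \<subseteq> P"
      using SP x(1) y(1) unfolding stable_plateau_def set_connected_def by blast
    have r: "is_path E (rev wx) x px" by (rule is_path_rev[OF sym x(2)])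
    note a1 = is_path_append[OF r u(1)]
    note a2 = is_path_append[OF a1(1) y(2)]
    show "\<exists>w. is_path E w x y \<and> set w \<subseteq> V"
    proof (intro exI conjI)
      show "is_path E ((rev wx @ tl u) @ tl wy) x y" by (rule a2(1))
      have t1: "set (tl u) \<subseteq> set u" by (cases u) auto
      have t2: "set (tl wy) \<subseteq> set wy" by (cases wy) auto
      show "set ((rev wx @ tl u) @ tl wy) \<subseteq> V" using t1 t2 x(3) y(3) u(2) PV by auto
    qed
  qed
  have bd: "\<And>z. z \<in> boundary E V \<Longrightarrow> c \<le> H z"
  proof -
    fix z assume "z \<in> boundary E V"
    then obtain y where zy: "z \<notin> V" "y \<in> V" "E z y" unfolding boundary_def by blast
    obtain p where p: "p \<in> P" "phi y = ch p y" using phiE by blast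
    have "c \<le> phi z" using zy(1) unfolding V by simp
    also have "\<dots> \<le> ch p z" by (rule phiL[OF p(1)])
    also have "\<dots> \<le> max (ch p y) (ch y z)" by (rule ch_tri)
    finally have 1: "c \<le> max (ch p y) (ch y z)" .
    have 2: "ch y z \<le> max (H y) (H z)" by (rule ch_edge[OF sym[OF zy(3)]])
    have 3: "H y \<le> ch p y" by (rule ch_ge2)
    have 4: "ch p y < c" using p(2) zy(2) unfolding V by simp
    show "c \<le> H z" using 1 2 3 4 by linarith
  qed
  have cyc: "is_cycle E H V"
    unfolding is_cycle_def using PV Pne Vconn HV bd by fastforce
  have minP: "\<And>x0. x0 \<in> V \<Longrightarrow> \<forall>y\<in>V. H x0 \<le> H y \<Longrightarrow> x0 \<in> P"
  proof -
    fix x0 assume x0: "x0 \<in> V" "\<forall>y\<in>V. H x0 \<le> H y"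
    define m where "m = H x0"
    define Q where "Q = {y. \<exists>w. is_path E w x0 y \<and> set w \<subseteq> V \<and> (\<forall>z\<in>set w. H z = m)}"
    have x0Q: "x0 \<in> Q" unfolding Q_def m_def using is_path_single[of E x0] x0(1) by (intro CollectI exI[of _ "[x0]"]) auto
    have Qprops: "\<And>y. y \<in> Q \<Longrightarrow> y \<in> V \<and> H y = m"
    proof -
      fix y assume "y \<in> Q"
      then obtain w where "is_path E w x0 y" "set w \<subseteq> V" "\<forall>z\<in>set w. H z = m" unfolding Q_def by blast
      moreover have "y \<in> set w" using \<open>is_path E w x0 y\<close> unfolding is_path_def by auto
      ultimately show "y \<in> V \<and> H y = m" by blast
    qed
    have Qclosed: "\<And>w y. is_path E w x0 y \<Longrightarrow> set w \<subseteq> V \<Longrightarrow> \<forall>z\<in>set w. H z = m \<Longrightarrow> set w \<subseteq> Q"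
    proof
      fix w y z assume a: "is_path E w x0 y" "set w \<subseteq> V" "\<forall>z\<in>set w. H z = m" "z \<in> set w"
      obtain w' where "is_path E w' x0 z" "set w' \<subseteq> set w" using is_path_prefix[OF a(1) a(4)] by blast
      then show "z \<in> Q" unfolding Q_def using a(2,3) by blast
    qed
    have Qconn: "set_connected E Q"
      unfolding set_connected_def
    proof (intro ballI)
      fix a b assume "a \<in> Q" "b \<in> Q"
      obtain wa where wa: "is_path E wa x0 a" "set wa \<subseteq> V" "\<forall>z\<in>set wa. H z = m" using \<open>a \<in> Q\<close> unfolding Q_def by blast
      obtain wb where wb: "is_path E wb x0 b" "set wb \<subseteq> V" "\<forall>z\<in>set wb. H z = m" using \<open>b \<in> Q\<close> unfolding Q_def by blast
      note ap = is_path_append[OF is_path_rev[OF sym wa(1)] wb(1)]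
      have "set (rev wa @ tl wb) \<subseteq> Q" using ap(2) Qclosed[OF wa] Qclosed[OF wb] by auto
      then show "\<exists>w. is_path E w a b \<and> set w \<subseteq> Q" using ap(1) by blast
    qed
    have HvalQ: "Hval H Q = m"
    proof -
      have "(SOME x. x \<in> Q) \<in> Q" using x0Q by (rule someI)
      then show ?thesis unfolding Hval_def using Qprops by blast
    qed
    have Qstab: "stable_plateau E H Q"
      unfolding stable_plateau_def
    proof (intro conjI ballI)
      show "Q \<noteq> {}" using x0Q by blast
      show "set_connected E Q" by (rule Qconn)
      fix x y assume "x \<in> Q" "y \<in> Q" then show "H x = H y" using Qprops by simp
    next
      fix z assume "z \<in> boundary E Q"
      then obtain y where zy: "z \<notin> Q" "y \<in> Q" "E z y" unfolding boundary_def by blast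
      have yV: "y \<in> V" "H y = m" using Qprops[OF zy(2)] by auto
      show "Hval H Q < H z"
      proof (cases "z \<in> V")
        case True
        have "H z \<noteq> m"
        proof
          assume "H z = m"
          obtain w where w: "is_path E w x0 y" "set w \<subseteq> V" "\<forall>z\<in>set w. H z = m" using zy(2) unfolding Q_def by blast
          note ap = is_path_append[OF w(1) is_path_edge[of E y z, OF sym[OF zy(3)]]]
          have "z \<in> Q" unfolding Q_def using ap w(2,3) True \<open>H z = m\<close> by (intro CollectI exI[of _ "w @ tl [y, z]"]) auto
          then show False using zy(1) by blast
        qed
        moreover have "m \<le> H z" using x0(2) True unfolding m_def by blast
        ultimately show ?thesis using HvalQ by simp
      next
        case False
        then have "z \<in> boundary E V" using yV(1) zy(3) unfolding boundary_def by blast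
        then have "c \<le> H z" by (rule bd)
        moreover have "m < c" using HV[OF x0(1)] unfolding m_def .
        ultimately show ?thesis using HvalQ by simp
      qed
    qed
    have QP: "Q \<in> plateaux1 E H" unfolding plateaux1_def using Qstab Qprops VO by blast
    have "Q = P"
    proof (rule ccontr)
      assume "Q \<noteq> P"
      from notV[OF QP this x0Q] x0(1) show False by blast
    qed
    then show "x0 \<in> P" using x0Q by simp
  qed
  have finV: "finite V" by simp
  have Vne: "V \<noteq> {}" using PV Pne by blast
  obtain x0 where x0: "x0 \<in> V" "H x0 = Min (H ` V)"
    using Min_in[of "H ` V"] finV Vne by (metis (no_types, lifting) finite_imageI image_iff image_is_empty)
  have x0min: "\<forall>y\<in>V. H x0 \<le> H y" using x0(2) finV by simp
  have x0P: "x0 \<in> P" by (rule minP[OF x0(1) x0min])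
  have hmin: "\<forall>y\<in>V. h \<le> H y" using x0min hP[OF x0P] by simp
  have bot: "bottom H V = P"
  proof
    show "bottom H V \<subseteq> P" unfolding bottom_def using minP by blast
    show "P \<subseteq> bottom H V" unfolding bottom_def using PV hmin hP by auto
  qed
  have minV: "Min (H ` V) = h" using x0(2) hP[OF x0P] by simp
  have minB: "Min (H ` boundary E V) = c"
  proof (rule Min_eqI)
    show "finite (H ` boundary E V)" by simp
    show "\<And>y. y \<in> H ` boundary E V \<Longrightarrow> c \<le> y" using bd by blast
    obtain w where w: "is_path E w p0 q0" "path_height H w = ch p0 q0" using ch_ex[OF conn] by blast
    obtain a b where ab: "a \<in> V" "b \<notin> V" "E a b" "b \<in> set w"
      using first_exit[OF w(1) PV[THEN subsetD, OF c0(1)] notV[OF c0(2,3,4)]] by blast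
    have bB: "b \<in> boundary E V" using ab sym unfolding boundary_def by blast
    have "H b \<le> c" using path_height_ge[OF ab(4), of H] w(2) c0(5) by simp
    then have "H b = c" using bd[OF bB] by simp
    then show "c \<in> H ` boundary E V" using bB by (metis imageI)
  qed
  have dep: "cycle_depth E H V = Gamma1 E H P"
    unfolding cycle_depth_def Gamma1_def minV minB c_def h_def by simp
  show ?thesis using cyc VO bot dep unfolding V_def by blast
qed

end

theorem mainTheorem2:
  fixes E :: "'a::finite \<Rightarrow> 'a \<Rightarrow> bool" and H :: "'a \<Rightarrow> real"
  assumes sym: "\<And>x y. E x y \<Longrightarrow> E y x"
    and conn: "graph_connected E"
    and nu0: "card (plateaux1 E H) \<ge> 2"
  shows "(\<forall>P \<in> plateaux1 E H. \<forall>Q \<in> plateaux1 E H. P \<noteq> Q \<longrightarrow> V1 E H P \<inter> V1 E H Q = {})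
    \<and> (\<forall>P \<in> plateaux1 E H.
         is_cycle E H (V1 E H P) \<and> V1 E H P \<subseteq> Omega_bar E H
         \<and> bottom H (V1 E H P) = P
         \<and> cycle_depth E H (V1 E H P) = Gamma1 E H P)"
proof (intro conjI ballI impI)
  fix P Q assume "P \<in> plateaux1 E H" "Q \<in> plateaux1 E H" "P \<noteq> Q"
  then show "V1 E H P \<inter> V1 E H Q = {}" using V_disj[OF sym conn] by metis
next
  fix P assume P: "P \<in> plateaux1 E H"
  have "\<exists>R\<in>plateaux1 E H. R \<noteq> P"
  proof (rule ccontr)
    assume "\<not> ?thesis"
    then have "plateaux1 E H \<subseteq> {P}" by blast
    then have "card (plateaux1 E H) \<le> 1" using card_mono[of "{P}"] by simp
    then show False using nu0 by simp
  qed
  then obtain R where "R \<in> plateaux1 E H" "R \<noteq> P" by blast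
  note m = V_main[OF sym conn P this]
  show "is_cycle E H (V1 E H P)" using m by blast
  show "V1 E H P \<subseteq> Omega_bar E H" using m by blast
  show "bottom H (V1 E H P) = P" using m by blast
  show "cycle_depth E H (V1 E H P) = Gamma1 E H P" using m by blast
qed

end
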